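(* The set of partitions whose odd parts all have multiplicity at most $1$ (Schröder partitions) is exactly the set of partitions $\lambda$ with $c_2(c_2(\lambda))=\lambda$.
   Context: For a partition $\lambda$, let $\lambda'_j=\#\{t:\lambda_t\ge j\}$ be the length of the $j$-th column of its Young shape. For a positive integer $n$, $c_n(\lambda)$ is the partition whose $i$-th part is $\sum_{j=(i-1)n+1}^{in}\lambda'_j$ (zero parts omitted), i.e. the total number of cells in columns $(i-1)n+1,\dots,in$ of $\lambda$. *)

theory Defs
  imports Main
begin

definition is_partition :: "nat list \<Rightarrow> bool" where
  "is_partition lam \<longleftrightarrow> sorted_wrt (\<ge>) lam \<and> (\<forall>x\<in>set lam. 0 < x)"

definition col :: "nat list \<Rightarrow> nat \<Rightarrow> nat" where
  "col lam j = length (filter (\<lambda>x. j \<le> x) lam)"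

text \<open>Indices i beyond sum_list lam
  contribute only zero parts (for n >= 1), so ranging i over that bound suffices.\<close>
definition cn :: "nat \<Rightarrow> nat list \<Rightarrow> nat list" where
  "cn n lam = filter (\<lambda>x. 0 < x)
     (map (\<lambda>i. \<Sum>j\<in>{(i - 1) * n + 1 .. i * n}. col lam j) [1..<Suc (sum_list lam)])"

definition schroeder :: "nat list \<Rightarrow> bool" where
  "schroeder lam \<longleftrightarrow> (\<forall>k. odd k \<longrightarrow> count_list lam k \<le> 1)"

end

theory Submission
  imports Defs
begin

definition FF :: "nat list \<Rightarrow> nat \<Rightarrow> nat" where
  "FF lam i = col lam (2*i - 1) + col lam (2*i)"

lemma sum2: "(\<Sum>j\<in>{(i - 1) * 2 + 1 .. i * 2}. f j) = f (2*i-1) + f (2*i)" if "1 \<le> i" for f :: "nat \<Rightarrow> nat"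
proof -
  define m where "m = i - 1"
  have m: "i = Suc m" using that unfolding m_def by simp
  have "{(i - 1) * 2 + 1 .. i * 2} = {2*m+1, 2*m+2}" using m by auto
  then show ?thesis using m by simp
qed

lemma cn2_eq: "cn 2 lam = filter (\<lambda>x. 0 < x) (map (FF lam) [1..<Suc (sum_list lam)])"
  unfolding cn_def FF_def
proof (rule arg_cong[where f="filter _"], rule map_cong[OF refl])
  fix x assume "x \<in> set [1..<Suc (sum_list lam)]"
  then have "1 \<le> x" by auto
  then show "(\<Sum>j\<in>{(x - 1) * 2 + 1 .. x * 2}. col lam j) = col lam (2*x-1) + col lam (2*x)"
    by (rule sum2)
qed

lemma col_le_length: "col lam j \<le> length lam"
  unfolding col_def by simp

lemma col_big: "sum_list lam < j \<Longrightarrow> col lam j = 0"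
  unfolding col_def using member_le_sum_list[of _ lam]
  by (auto simp: filter_empty_conv) (meson leD le_trans)

lemma col_Suc: "col lam j = col lam (Suc j) + count_list lam j"
  unfolding col_def by (induction lam) auto

lemma col_anti: "j \<le> j' \<Longrightarrow> col lam j' \<le> col lam j"
  unfolding col_def by (induction lam) auto

lemma col_ge_iff:
  assumes "sorted_wrt (\<ge>) lam" "1 \<le> k"
  shows "(k \<le> col lam j) \<longleftrightarrow> (k \<le> length lam \<and> j \<le> lam!(k-1))"
  using assms
proof (induction lam arbitrary: k)
  case Nil
  then show ?case by (simp add: col_def)
next
  case (Cons x xs)
  have s: "sorted_wrt (\<ge>) xs" and bx: "\<forall>y\<in>set xs. y \<le> x" using Cons.prems by auto
  show ?case
  proof (cases "j \<le> x")
    case False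
    have c0: "col (x#xs) j = 0" unfolding col_def using bx False
      by (auto simp: filter_empty_conv)
    have "\<not> (k \<le> length (x#xs) \<and> j \<le> (x#xs)!(k-1))"
    proof
      assume h: "k \<le> length (x#xs) \<and> j \<le> (x#xs)!(k-1)"
      show False
      proof (cases k)
        case 0 then show False using Cons.prems by simp
      next
        case (Suc k')
        show False
        proof (cases k')
          case 0 then show False using h Suc False by simp
        next
          case (Suc k'')
          then have "xs!k'' \<in> set xs" using h \<open>k = Suc k'\<close> by simp
          then have "xs!k'' \<le> x" using bx by blast
          then show False using h \<open>k = Suc k'\<close> Suc False by simp
        qed
      qed
    qed
    then show ?thesis using c0 Cons.prems by simp
  next
    case True
    have c: "col (x#xs) j = Suc (col xs j)" using True by (simp add: col_def)
    show ?thesis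
    proof (cases "k = 1")
      case True
      then show ?thesis using c \<open>j \<le> x\<close> by simp
    next
      case False
      then obtain k' where k': "k = Suc k'" "1 \<le> k'" using Cons.prems by (cases k) auto
      have "(k' \<le> col xs j) \<longleftrightarrow> (k' \<le> length xs \<and> j \<le> xs!(k'-1))"
        using Cons.IH[OF s k'(2)] .
      moreover have "(x#xs)!(k-1) = xs!(k'-1)" using k' by (cases k') auto
      ultimately show ?thesis using c k' by simp
    qed
  qed
qed

lemma col_cn2: "1 \<le> j \<Longrightarrow> col (cn 2 lam) j = card {i. 1 \<le> i \<and> j \<le> FF lam i}"
proof -
  assume j: "1 \<le> j"
  let ?S = "sum_list lam"
  have "col (cn 2 lam) j = length (filter (\<lambda>i. j \<le> FF lam i) [1..<Suc ?S])"
  proof -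
    have eq: "\<And>x. (0 < x \<and> j \<le> x) = (j \<le> (x::nat))" using j by auto
    show ?thesis unfolding cn2_eq col_def
      by (simp only: filter_filter filter_map comp_def length_map eq)
  qed
  also have "\<dots> = card (set (filter (\<lambda>i. j \<le> FF lam i) [1..<Suc ?S]))"
    by (rule distinct_card[symmetric]) simp
  also have "set (filter (\<lambda>i. j \<le> FF lam i) [1..<Suc ?S]) = {i. 1 \<le> i \<and> j \<le> FF lam i}"
  proof -
    have z: "FF lam i = 0" if "?S < i" "1 \<le> i" for i
      unfolding FF_def using that by (simp add: col_big)
    show ?thesis
    proof (rule set_eqI)
      fix x
      show "x \<in> set (filter (\<lambda>i. j \<le> FF lam i) [1..<Suc ?S]) \<longleftrightarrow> x \<in> {i. 1 \<le> i \<and> j \<le> FF lam i}"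
      proof
        assume "x \<in> set (filter (\<lambda>i. j \<le> FF lam i) [1..<Suc ?S])"
        then show "x \<in> {i. 1 \<le> i \<and> j \<le> FF lam i}" by auto
      next
        assume h: "x \<in> {i. 1 \<le> i \<and> j \<le> FF lam i}"
        then have "x \<le> ?S" using z[of x] j by (cases "?S < x") auto
        then show "x \<in> set (filter (\<lambda>i. j \<le> FF lam i) [1..<Suc ?S])" using h by (simp del: upt_Suc)
      qed
    qed
  qed
  finally show ?thesis .
qed


lemma FF_ge:
  assumes p: "is_partition lam" and sch: "schroeder lam" and k: "1 \<le> k" "k \<le> length lam" and i: "1 \<le> i"
  shows "(2*k \<le> FF lam i \<longleftrightarrow> 2*i \<le> lam!(k-1)) \<and> (2*k-1 \<le> FF lam i \<longleftrightarrow> 2*i-1 \<le> lam!(k-1))"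
proof -
  have s: "sorted_wrt (\<ge>) lam" using p unfolding is_partition_def by simp
  define c1 where "c1 = col lam (2*i-1)"
  define c2 where "c2 = col lam (2*i)"
  define d where "d = count_list lam (2*i-1)"
  have "Suc (2*i-1) = 2*i" using i by simp
  then have e: "c1 = c2 + d" unfolding c1_def c2_def d_def using col_Suc[of lam "2*i-1"] by simp
  have "odd (2*i-1)" using i by simp
  then have d1: "d \<le> 1" using sch unfolding schroeder_def d_def by blast
  have h1: "k \<le> c1 \<longleftrightarrow> 2*i-1 \<le> lam!(k-1)" unfolding c1_def using col_ge_iff[OF s k(1)] k(2) by simp
  have h2: "k \<le> c2 \<longleftrightarrow> 2*i \<le> lam!(k-1)" unfolding c2_def using col_ge_iff[OF s k(1)] k(2) by simp
  have f: "FF lam i = c1 + c2" unfolding FF_def c1_def c2_def by simp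
  have a1: "2*k \<le> c1 + c2 \<longleftrightarrow> k \<le> c2" using e d1 by linarith
  have a2: "2*k-1 \<le> c1 + c2 \<longleftrightarrow> k \<le> c1" using e d1 k(1) by linarith
  show ?thesis using a1 a2 h1 h2 f by simp
qed

lemma FF_le: "FF lam i \<le> 2 * length lam"
  unfolding FF_def using col_le_length[of lam] by (simp add: add_le_mono mult_2)

lemma card_half1: "card {i::nat. 1 \<le> i \<and> 2*i-1 \<le> x} = (x+1) div 2"
proof -
  have "{i::nat. 1 \<le> i \<and> 2*i-1 \<le> x} = {1..(x+1) div 2}" by auto
  then show ?thesis by simp
qed

lemma card_half2: "card {i::nat. 1 \<le> i \<and> 2*i \<le> x} = x div 2"
proof -
  have "{i::nat. 1 \<le> i \<and> 2*i \<le> x} = {1..x div 2}" by auto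
  then show ?thesis by simp
qed

lemma FF_cn2:
  assumes p: "is_partition lam" and sch: "schroeder lam" and k: "1 \<le> k"
  shows "FF (cn 2 lam) k = (if k \<le> length lam then lam!(k-1) else 0)"
proof -
  have "FF (cn 2 lam) k = card {i. 1 \<le> i \<and> 2*k-1 \<le> FF lam i} + card {i. 1 \<le> i \<and> 2*k \<le> FF lam i}"
    using k col_cn2[of "2*k-1" lam] col_cn2[of "2*k" lam] unfolding FF_def[of "cn 2 lam" k] by simp
  also have "\<dots> = (if k \<le> length lam then lam!(k-1) else 0)"
  proof (cases "k \<le> length lam")
    case True
    define x where "x = lam!(k-1)"
    have A: "{i. 1 \<le> i \<and> 2*k-1 \<le> FF lam i} = {i. 1 \<le> i \<and> 2*i-1 \<le> x}"
      using FF_ge[OF p sch k True] unfolding x_def by blast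
    have B: "{i. 1 \<le> i \<and> 2*k \<le> FF lam i} = {i. 1 \<le> i \<and> 2*i \<le> x}"
      using FF_ge[OF p sch k True] unfolding x_def by blast
    show ?thesis unfolding A B card_half1 card_half2 using True x_def by simp
  next
    case False
    have "\<not> 2*k-1 \<le> FF lam i" for i using FF_le[of lam i] False by linarith
    then have A: "{i. 1 \<le> i \<and> 2*k-1 \<le> FF lam i} = {}" by blast
    have "\<not> 2*k \<le> FF lam i" for i using FF_le[of lam i] False by linarith
    then have B: "{i. 1 \<le> i \<and> 2*k \<le> FF lam i} = {}" by blast
    show ?thesis unfolding A B using False by simp
  qed
  finally show ?thesis .
qed

lemma cn2_cn2:
  assumes p: "is_partition lam" and sch: "schroeder lam"
  shows "cn 2 (cn 2 lam) = lam"
proof -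
  define mu where "mu = cn 2 lam"
  define n where "n = length lam"
  define S' where "S' = sum_list mu"
  have pos: "\<forall>x\<in>set lam. 0 < x" using p unfolding is_partition_def by simp
  have nS: "n \<le> S'"
  proof (cases "n = 0")
    case True then show ?thesis by simp
  next
    case False
    have "lam!0 \<in> set lam" using False n_def by simp
    then have "1 \<le> lam!0" "lam!0 \<le> sum_list lam" using pos by (auto intro: member_le_sum_list)
    then have S1: "1 \<in> set [1..<Suc (sum_list lam)]" by (simp; linarith)
    have "filter (\<lambda>x. 1 \<le> x) lam = lam" using pos by (simp add: Suc_le_eq)
    then have "col lam 1 = n" unfolding col_def n_def by simp
    then have F1: "n \<le> FF lam 1" unfolding FF_def by simp
    then have "FF lam 1 \<in> set mu" unfolding mu_def cn2_eq using S1 False by auto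
    then have "FF lam 1 \<le> S'" unfolding S'_def by (rule member_le_sum_list) auto
    then show ?thesis using F1 by simp
  qed
  have split: "[1..<Suc S'] = [1..<Suc n] @ [Suc n..<Suc S']"
    using upt_add_eq_append[of 1 "Suc n" "S' - n"] nS by simp
  have m1: "map (FF mu) [1..<Suc n] = lam"
  proof (rule nth_equalityI)
    show "length (map (FF mu) [1..<Suc n]) = length lam" unfolding length_map length_upt n_def by simp
  next
    fix t assume "t < length (map (FF mu) [1..<Suc n])"
    then have t: "t < n" by (simp del: upt_Suc)
    have "map (FF mu) [1..<Suc n] ! t = FF mu (Suc t)" using t by (simp add: nth_upt del: upt_Suc)
    also have "\<dots> = lam ! t" unfolding mu_def using FF_cn2[OF p sch, of "Suc t"] t n_def by simp
    finally show "map (FF mu) [1..<Suc n] ! t = lam ! t" .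
  qed
  have m2: "filter (\<lambda>x. 0 < x) (map (FF mu) [Suc n..<Suc S']) = []"
  proof -
    have "\<forall>k\<in>set [Suc n..<Suc S']. FF mu k = 0"
      unfolding mu_def using FF_cn2[OF p sch] n_def by auto
    then show ?thesis by (auto simp: filter_empty_conv)
  qed
  have "cn 2 mu = filter (\<lambda>x. 0 < x) (map (FF mu) [1..<Suc S'])" unfolding cn2_eq S'_def ..
  also have "\<dots> = lam" unfolding split map_append filter_append m1 m2 using pos by simp
  finally show ?thesis unfolding mu_def .
qed

lemma count_filter_le: "count_list (filter P xs) m \<le> count_list xs m"
  by (induction xs) auto

lemma count_map: "count_list (map f xs) m = length (filter (\<lambda>i. f i = m) xs)"
  by (induction xs) auto

lemma cn2_schroeder: "schroeder (cn 2 lam)"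
  unfolding schroeder_def
proof (intro allI impI)
  fix m :: nat assume m: "odd m"
  let ?F = "FF lam" and ?xs = "[1..<Suc (sum_list lam)]"
  have gen: "even (?F a)" if a: "1 \<le> a" "a < b" "?F a = ?F b" for a b
  proof -
    have "2*a - 1 \<le> 2*a" by simp
    then have c12: "col lam (2*a) \<le> col lam (2*a-1)" by (rule col_anti)
    have "2*a \<le> 2*b - 1" "2*a \<le> 2*b" using a by auto
    then have "col lam (2*b-1) \<le> col lam (2*a)" "col lam (2*b) \<le> col lam (2*a)"
      by (auto intro: col_anti)
    then have "col lam (2*a-1) = col lam (2*a)" using a(3) c12 unfolding FF_def by linarith
    then show ?thesis unfolding FF_def by simp
  qed
  have uniq: "i = i'" if "1 \<le> i" "1 \<le> i'" "?F i = m" "?F i' = m" for i i'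
  proof (rule ccontr)
    assume ne: "i \<noteq> i'"
    then have "even m"
    proof (cases "i < i'")
      case True then show ?thesis using gen[of i i'] that by simp
    next
      case False then have "i' < i" using ne by simp
      then show ?thesis using gen[of i' i] that by simp
    qed
    then show False using m by simp
  qed
  have "count_list (cn 2 lam) m \<le> count_list (map ?F ?xs) m"
    unfolding cn2_eq by (rule count_filter_le)
  also have "\<dots> = length (filter (\<lambda>i. ?F i = m) ?xs)" by (rule count_map)
  also have "\<dots> = card (set (filter (\<lambda>i. ?F i = m) ?xs))"
    by (rule distinct_card[symmetric]) simp
  also have "\<dots> \<le> 1"
    unfolding One_nat_def by (rule card_le_Suc0_iff_eq[THEN iffD2]) (use uniq in auto)
  finally show "count_list (cn 2 lam) m \<le> 1" .
qed

theorem mainTheorem3: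
  shows "{lam. is_partition lam \<and> schroeder lam} = {lam. is_partition lam \<and> cn 2 (cn 2 lam) = lam}"
proof -
  have "schroeder lam" if "cn 2 (cn 2 lam) = lam" for lam
    using cn2_schroeder[of "cn 2 lam"] that by simp
  then show ?thesis using cn2_cn2 by blast
qed

end
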